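(* Let $n\ge1$, let $X_1,\ldots,X_n$ be random variables with joint law $\mathcal{P}_{X^n}$ and product of marginals $\mathcal{P}_{\otimes_{i=1}^n X_i}$, with $\mathcal{P}_{X^n}\ll\mathcal{P}_{\otimes_{i=1}^n X_i}$, and let $f$ satisfy $|f(x_1,\ldots,x_i,\ldots,x_n)-f(x_1,\ldots,\hat x,\ldots,x_n)|\le 1/n$ for all $x^n,\hat x$ and $1\le i\le n$. Let $\alpha>1$, $\beta=\alpha/(\alpha-1)$, and $t_\alpha=\sqrt{\frac{\beta\ln H_\alpha(\mathcal{P}_{X^n}\|\mathcal{P}_{\otimes_{i=1}^n X_i})}{2\alpha n}}$. Then $$\left|\mathcal{P}_{X^n}(f)-\mathcal{P}_{\otimes_{i=1}^n X_i}(f)\right|\le t_\alpha+\frac{\sqrt\beta}{2^{1/\alpha}\sqrt{\frac{2n}{\alpha}\ln H_\alpha(\mathcal{P}_{X^n}\|\mathcal{P}_{\otimes_{i=1}^n X_i})}}.$$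
   Context: $\mu(g)=\int g\,d\mu$; for $\nu\ll\mu$, $H_\alpha(\nu\|\mu)=\int(d\nu/d\mu)^\alpha d\mu$. *)

theory Defs
  imports "HOL-Probability.Probability"
begin

definition renyi_H :: "real \<Rightarrow> 'a measure \<Rightarrow> 'a measure \<Rightarrow> ennreal" where
  "renyi_H \<alpha> \<nu> \<mu> = (\<integral>\<^sup>+ x. ennreal (enn2real (RN_deriv \<mu> \<nu> x) powr \<alpha>) \<partial>\<mu>)"

end

theory Submission
  imports Defs
begin

lemma young_pt:
  fixes G E H K a b :: real
  assumes "G \<ge> 0" "E > 0" "H > 0" "K > 0" "a > 1" "b = a / (a - 1)"
  shows "G * E \<le> H powr (1/a) * K powr (1/b) * (G powr a / (H * a) + E powr b / (K * b))"
proof -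
  have a1: "a - 1 > 0" using assms by simp
  have b1: "b > 1" "1/a + 1/b = 1" unfolding assms(6) using a1 assms(5) by (auto simp: field_simps)
  define A where "A = H powr (1/a)"
  define B where "B = K powr (1/b)"
  have A: "A > 0" "A powr a = H" using assms by (auto simp: A_def powr_powr)
  have B: "B > 0" "B powr b = K" using assms b1 by (auto simp: B_def powr_powr)
  have "(G/A) * (E/B) \<le> (G/A) powr a / a + (E/B) powr b / b"
    by (rule Youngs_inequality) (use assms b1 A B in auto)
  also have "\<dots> = G powr a / (H * a) + E powr b / (K * b)"
    using A B assms by (simp add: powr_divide)
  finally have "(G/A) * (E/B) \<le> G powr a / (H * a) + E powr b / (K * b)" .
  hence "A * B * ((G/A) * (E/B)) \<le> A * B * (G powr a / (H * a) + E powr b / (K * b))"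
    using A B by (intro mult_left_mono) auto
  moreover have "A * B * ((G/A) * (E/B)) = G * E" using A B by (simp add: field_simps)
  ultimately show ?thesis by (simp add: A_def B_def)
qed

lemma bdd_total:
  fixes f :: "('i \<Rightarrow> 'a) \<Rightarrow> real"
  assumes fin: "finite I"
    and bdd: "\<And>x i y. x \<in> space (PiM I N) \<Longrightarrow> i \<in> I \<Longrightarrow> y \<in> space (N i) \<Longrightarrow> \<bar>f x - f (x(i := y))\<bar> \<le> c"
    and x: "x \<in> space (PiM I N)" and y: "y \<in> space (PiM I N)"
  shows "\<bar>f x - f y\<bar> \<le> c * card I"
proof -
  have "S \<subseteq> I \<longrightarrow> \<bar>f x - f (\<lambda>j. if j \<in> S then y j else x j)\<bar> \<le> c * card S" for S
  proof (induction S rule: infinite_finite_induct)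
    case (infinite A)
    then show ?case using fin finite_subset by blast
  next
    case empty
    then show ?case by simp
  next
    case (insert k S)
    show ?case
    proof
      assume sub: "insert k S \<subseteq> I"
      define z where "z = (\<lambda>j. if j \<in> S then y j else x j)"
      have z: "z \<in> space (PiM I N)" using x y by (auto simp: z_def space_PiM PiE_def extensional_def Pi_def)
      have eq: "(\<lambda>j. if j \<in> insert k S then y j else x j) = z(k := y k)"
        by (auto simp: z_def)
      have "\<bar>f z - f (z(k := y k))\<bar> \<le> c"
        using bdd[OF z, of k "y k"] sub y by (auto simp: space_PiM PiE_def)
      moreover have "\<bar>f x - f z\<bar> \<le> c * card S" using insert sub by (simp add: z_def)
      ultimately have "\<bar>f x - f (z(k := y k))\<bar> \<le> c + c * card S" by arith
      then show "\<bar>f x - f (\<lambda>j. if j \<in> insert k S then y j else x j)\<bar> \<le> c * card (insert k S)"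
        unfolding eq using insert(1,2) by (simp add: algebra_simps)
    qed
  qed
  from this[of I] have "\<bar>f x - f (\<lambda>j. if j \<in> I then y j else x j)\<bar> \<le> c * card I" by simp
  moreover have "(\<lambda>j. if j \<in> I then y j else x j) = y"
    using x y by (auto simp: space_PiM PiE_def extensional_def)
  ultimately show ?thesis by simp
qed

lemma bdd_abs:
  fixes f :: "('i \<Rightarrow> 'a) \<Rightarrow> real"
  assumes fin: "finite I" and N: "\<And>i. i \<in> I \<Longrightarrow> prob_space (N i)"
    and bdd: "\<And>x i y. x \<in> space (PiM I N) \<Longrightarrow> i \<in> I \<Longrightarrow> y \<in> space (N i) \<Longrightarrow> \<bar>f x - f (x(i := y))\<bar> \<le> c"
  shows "\<exists>B. \<forall>x\<in>space (PiM I N). \<bar>f x\<bar> \<le> B"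
proof -
  interpret P: prob_space "PiM I N" by (rule prob_space_PiM) (rule N)
  obtain x0 where x0: "x0 \<in> space (PiM I N)" using P.not_empty by blast
  have "\<bar>f x\<bar> \<le> \<bar>f x0\<bar> + c * card I" if "x \<in> space (PiM I N)" for x
    using bdd_total[OF fin bdd x0 that] by arith
  then show ?thesis by blast
qed

lemma bdd_integrable:
  fixes f :: "('i \<Rightarrow> 'a) \<Rightarrow> real"
  assumes fin: "finite I" and N: "\<And>i. i \<in> I \<Longrightarrow> prob_space (N i)"
    and fm: "f \<in> borel_measurable (PiM I N)"
    and bdd: "\<And>x i y. x \<in> space (PiM I N) \<Longrightarrow> i \<in> I \<Longrightarrow> y \<in> space (N i) \<Longrightarrow> \<bar>f x - f (x(i := y))\<bar> \<le> c"
  shows "integrable (PiM I N) f"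
proof -
  interpret P: prob_space "PiM I N" by (rule prob_space_PiM) (rule N)
  have "\<exists>B. \<forall>x\<in>space (PiM I N). \<bar>f x\<bar> \<le> B"
    by (rule bdd_abs[where N=N and f=f and c=c]) (use fin N bdd in auto)
  then obtain B where B: "\<forall>x\<in>space (PiM I N). \<bar>f x\<bar> \<le> B" by blast
  show ?thesis
    by (rule P.integrable_const_bound[where B=B]) (use B fm in auto)
qed

lemma exp_split:
  fixes l a m h :: real
  shows "ennreal (exp (l*(a - m))) = ennreal (exp (l*(h - m))) * ennreal (exp (l*(a - h)))"
proof -
  have "exp (l*(a-m)) = exp(l*(h-m)) * exp(l*(a-h))" unfolding mult_exp_exp by (simp add: algebra_simps)
  then show ?thesis by (simp add: ennreal_mult)
qed

lemma mcd:
  fixes N :: "'i \<Rightarrow> 'a measure" and f :: "('i \<Rightarrow> 'a) \<Rightarrow> real"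
  assumes N: "\<And>i. prob_space (N i)" and fin: "finite I"
    and fm: "f \<in> borel_measurable (PiM I N)"
    and bdd: "\<And>x i y. x \<in> space (PiM I N) \<Longrightarrow> i \<in> I \<Longrightarrow> y \<in> space (N i) \<Longrightarrow> \<bar>f x - f (x(i := y))\<bar> \<le> c"
    and l: "l > 0"
  shows "(\<integral>\<^sup>+x. ennreal (exp (l * (f x - (\<integral>x. f x \<partial>PiM I N)))) \<partial>PiM I N) \<le> ennreal (exp (l^2 * c^2 * card I / 8))"
  using fin fm bdd
proof (induction I arbitrary: f rule: finite_induct)
  case empty
  then show ?case by (simp add: PiM_empty nn_integral_count_space_finite lebesgue_integral_count_space_finite)
next
  case (insert i J f)
  note fm = insert.prems(1)
  note bdd = insert.prems(2)
  interpret S: product_sigma_finite N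
    using N by (intro product_sigma_finite.intro) (simp add: prob_space_imp_sigma_finite)
  interpret PJ: prob_space "PiM J N" by (rule prob_space_PiM) (rule N)
  interpret PF: prob_space "PiM (insert i J) N" by (rule prob_space_PiM) (rule N)
  interpret Ni: prob_space "N i" by (rule N)
  have "\<exists>B. \<forall>x\<in>space (PiM (insert i J) N). \<bar>f x\<bar> \<le> B"
    apply (rule bdd_abs[where N=N and f=f and c=c])
    using insert(1) apply simp
     apply (rule N)
    apply (rule bdd; assumption)
    done
  then obtain B where B: "\<forall>x\<in>space (PiM (insert i J) N). \<bar>f x\<bar> \<le> B" by blast
  have fint: "integrable (PiM (insert i J) N) f"
    apply (rule bdd_integrable[where N=N and f=f and c=c])
    using insert(1) apply simp
      apply (rule N)
     apply (rule fm)
    apply (rule bdd; assumption)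
    done
  define h where "h x = (\<integral>y. f (x(i := y)) \<partial>N i)" for x
  have upd: "x(i := y) \<in> space (PiM (insert i J) N)" if "x \<in> space (PiM J N)" "y \<in> space (N i)" for x y
    using measurable_space[OF measurable_component_update[OF that(1) insert(2)] that(2)] .
  have gm: "(\<lambda>y. f (x(i := y))) \<in> borel_measurable (N i)" if "x \<in> space (PiM J N)" for x
    using measurable_comp[OF measurable_component_update[OF that insert(2)] fm] by (simp add: comp_def)
  have gint: "integrable (N i) (\<lambda>y. f (x(i := y)))" if "x \<in> space (PiM J N)" for x
    by (rule Ni.integrable_const_bound[where B=B]) (use B upd[OF that] gm[OF that] in auto)
  have hm: "h \<in> borel_measurable (PiM J N)"
  proof -
    have "(\<lambda>(x, y). f (x(i := y))) \<in> borel_measurable (PiM J N \<Otimes>\<^sub>M N i)"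
      using measurable_comp[OF measurable_add_dim fm] by (simp add: comp_def split_beta')
    then show ?thesis unfolding h_def by (rule sigma_finite_measure.borel_measurable_lebesgue_integral[OF prob_space_imp_sigma_finite[OF N]])
  qed
  have hbdd: "\<bar>h x - h (x(j := z))\<bar> \<le> c"
    if x: "x \<in> space (PiM J N)" and j: "j \<in> J" and z: "z \<in> space (N j)" for x j z
  proof -
    have x': "x(j := z) \<in> space (PiM J N)"
      using x j z by (auto simp: space_PiM PiE_def extensional_def)
    have ij: "i \<noteq> j" using insert(2) j by auto
    have pt: "\<bar>f (x(i := y)) - f ((x(j := z))(i := y))\<bar> \<le> c" if y: "y \<in> space (N i)" for y
    proof -
      have eq: "(x(j := z))(i := y) = (x(i := y))(j := z)" using ij by (auto simp: fun_eq_iff)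
      have b: "\<bar>f (x(i := y)) - f ((x(i := y))(j := z))\<bar> \<le> c"
        by (rule bdd[OF upd[OF x y]]) (use j z in auto)
      show ?thesis unfolding eq by (rule b)
    qed
    have "h x \<le> (\<integral>y. f ((x(j := z))(i := y)) + c \<partial>N i)"
      unfolding h_def
    proof (rule integral_mono)
      show "integrable (N i) (\<lambda>y. f ((x(j := z))(i := y)) + c)" using gint[OF x'] by (simp add: Ni.prob_space)
      fix y assume "y \<in> space (N i)" then show "f (x(i := y)) \<le> f ((x(j := z))(i := y)) + c" using pt by fastforce
    qed (rule gint[OF x])
    also have "\<dots> = h (x(j := z)) + c" unfolding h_def using gint[OF x'] by (simp add: Ni.prob_space)
    finally have 1: "h x \<le> h (x(j := z)) + c" .
    have "h (x(j := z)) \<le> (\<integral>y. f (x(i := y)) + c \<partial>N i)"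
      unfolding h_def
    proof (rule integral_mono)
      show "integrable (N i) (\<lambda>y. f (x(i := y)) + c)" using gint[OF x] by (simp add: Ni.prob_space)
      fix y assume "y \<in> space (N i)" then show "f ((x(j := z))(i := y)) \<le> f (x(i := y)) + c" using pt by fastforce
    qed (rule gint[OF x'])
    also have "\<dots> = h x + c" unfolding h_def using gint[OF x] by (simp add: Ni.prob_space)
    finally have 2: "h (x(j := z)) \<le> h x + c" .
    from 1 2 show ?thesis by arith
  qed
  have mu: "(\<integral>x. f x \<partial>PiM (insert i J) N) = (\<integral>x. h x \<partial>PiM J N)"
    unfolding h_def by (rule S.product_integral_insert[OF insert(1,2) fint])
  have IH: "(\<integral>\<^sup>+x. ennreal (exp (l * (h x - (\<integral>x. h x \<partial>PiM J N)))) \<partial>PiM J N) \<le> ennreal (exp (l^2 * c^2 * card J / 8))"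
    by (rule insert.IH[OF hm hbdd])
  have hoef: "(\<integral>\<^sup>+y. ennreal (exp (l * (f (x(i := y)) - h x))) \<partial>N i) \<le> ennreal (exp (l^2 * c^2 / 8))"
    if x: "x \<in> space (PiM J N)" for x
  proof -
    define g where "g y = f (x(i := y))" for y
    define m where "m = (INF y\<in>space (N i). g y)"
    have ne: "space (N i) \<noteq> {}" by (rule Ni.not_empty)
    have bb: "bdd_below (g ` space (N i))"
      using B upd[OF x] unfolding g_def bdd_below_def by (intro exI[of _ "-B"]) force
    have lo: "m \<le> g y" if "y \<in> space (N i)" for y
      unfolding m_def by (rule cInf_lower) (use that bb in auto)
    have hi: "g y \<le> m + c" if y: "y \<in> space (N i)" for y
    proof -
      have "g y - c \<le> m"
        unfolding m_def
      proof (rule cInf_greatest)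
        show "g ` space (N i) \<noteq> {}" using ne by simp
        fix v assume "v \<in> g ` space (N i)"
        then obtain y' where y': "y' \<in> space (N i)" "v = g y'" by auto
        have "\<bar>f (x(i := y')) - f ((x(i := y'))(i := y))\<bar> \<le> c"
          by (rule bdd[OF upd[OF x y'(1)]]) (use y in auto)
        then show "g y - c \<le> v" using y' by (simp add: g_def)
      qed
      then show ?thesis by simp
    qed
    have geq: "g = (\<lambda>y. f (x(i := y)))" by (simp add: fun_eq_iff g_def)
    interpret G: interval_bounded_random_variable "N i" g m "m + c"
    proof unfold_locales
      show "g \<in> borel_measurable (N i)" unfolding geq by (rule gm[OF x])
      show "AE y in N i. g y \<in> {m..m + c}" using lo hi by (intro AE_I2) auto
    qed
    have "(\<integral>\<^sup>+y. ennreal (exp (l * (g y - Ni.expectation g))) \<partial>N i) \<le> ennreal (exp (l\<^sup>2 * (m + c - m)\<^sup>2 / 8))"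
      by (rule G.Hoeffdings_lemma_nn_integral[OF l])
    moreover have "Ni.expectation g = h x" by (simp add: geq h_def)
    ultimately show ?thesis by (simp add: geq power_mult_distrib)
  qed
  have expm: "(\<lambda>x. ennreal (exp (l * (f x - C)))) \<in> borel_measurable (PiM (insert i J) N)" for C
    using measurable_comp[OF fm, of "\<lambda>v. ennreal (exp (l * (v - C)))" borel] by (simp add: comp_def)
  have "(\<integral>\<^sup>+x. ennreal (exp (l * (f x - (\<integral>x. f x \<partial>PiM (insert i J) N)))) \<partial>PiM (insert i J) N)
      = (\<integral>\<^sup>+x. (\<integral>\<^sup>+y. ennreal (exp (l * (f (x(i := y)) - (\<integral>x. h x \<partial>PiM J N)))) \<partial>N i) \<partial>PiM J N)"
    unfolding mu by (rule S.product_nn_integral_insert[OF insert(1,2) expm])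
  also have "\<dots> = (\<integral>\<^sup>+x. ennreal (exp (l * (h x - (\<integral>x. h x \<partial>PiM J N)))) *
        (\<integral>\<^sup>+y. ennreal (exp (l * (f (x(i := y)) - h x))) \<partial>N i) \<partial>PiM J N)"
  proof (rule nn_integral_cong)
    fix x assume x: "x \<in> space (PiM J N)"
    have "(\<integral>\<^sup>+y. ennreal (exp (l * (f (x(i := y)) - (\<integral>x. h x \<partial>PiM J N)))) \<partial>N i)
       = (\<integral>\<^sup>+y. ennreal (exp (l * (h x - (\<integral>x. h x \<partial>PiM J N)))) * ennreal (exp (l * (f (x(i := y)) - h x))) \<partial>N i)"
      by (intro nn_integral_cong) (rule exp_split)
    also have "\<dots> = ennreal (exp (l * (h x - (\<integral>x. h x \<partial>PiM J N)))) * (\<integral>\<^sup>+y. ennreal (exp (l * (f (x(i := y)) - h x))) \<partial>N i)"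
      using measurable_comp[OF gm[OF x], of "\<lambda>v. ennreal (exp (l * (v - h x)))" borel]
      by (intro nn_integral_cmult) (simp add: comp_def)
    finally show "(\<integral>\<^sup>+y. ennreal (exp (l * (f (x(i := y)) - (\<integral>x. h x \<partial>PiM J N)))) \<partial>N i)
       = ennreal (exp (l * (h x - (\<integral>x. h x \<partial>PiM J N)))) * (\<integral>\<^sup>+y. ennreal (exp (l * (f (x(i := y)) - h x))) \<partial>N i)" .
  qed
  also have "\<dots> \<le> (\<integral>\<^sup>+x. ennreal (exp (l * (h x - (\<integral>x. h x \<partial>PiM J N)))) * ennreal (exp (l^2 * c^2 / 8)) \<partial>PiM J N)"
    by (intro nn_integral_mono mult_left_mono hoef) auto
  also have "\<dots> = (\<integral>\<^sup>+x. ennreal (exp (l * (h x - (\<integral>x. h x \<partial>PiM J N)))) \<partial>PiM J N) * ennreal (exp (l^2 * c^2 / 8))"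
    using measurable_comp[OF hm, of "\<lambda>v. ennreal (exp (l * (v - (\<integral>x. h x \<partial>PiM J N))))" borel]
    by (intro nn_integral_multc) (simp add: comp_def)
  also have "\<dots> \<le> ennreal (exp (l^2 * c^2 * card J / 8)) * ennreal (exp (l^2 * c^2 / 8))"
    by (intro mult_right_mono IH) auto
  also have "\<dots> = ennreal (exp (l^2 * c^2 * card (insert i J) / 8))"
    using insert(1,2) by (simp add: ennreal_mult[symmetric] exp_add[symmetric] add_divide_distrib algebra_simps)
  finally show ?case .
qed

lemma opt_bound:
  fixes d L a b :: real
  assumes L: "L \<ge> 0" and a: "a > 0" and b: "b > 0"
    and H: "\<And>l. l > 0 \<Longrightarrow> d \<le> L / (a * l) + l * b"
  shows "d \<le> sqrt (4 * b * L / a)"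
proof (cases "L = 0")
  case True
  show ?thesis
  proof (rule ccontr)
    assume "\<not> ?thesis"
    then have d: "d > 0" using True by simp
    have "d \<le> L / (a * (d / (2*b))) + (d / (2*b)) * b" by (rule H) (use d b in simp)
    then show False using True d b by simp
  qed
next
  case False
  then have L: "L > 0" using L by simp
  define r where "r = sqrt (L / (a * b))"
  have r: "r > 0" using L a b by (simp add: r_def)
  have r2: "r^2 = L / (a * b)" using L a b by (simp add: r_def)
  have Lr: "L = r^2 * a * b" using r2 a b by (simp add: field_simps)
  have "L / (a * r) = r * b"
    using Lr r a by (simp add: field_simps power2_eq_square)
  then have "d \<le> 2 * r * b" using H[OF r] by linarith
  also have "2 * r * b = sqrt (4 * b * L / a)"
  proof (rule real_sqrt_unique[symmetric])
    show "(2 * r * b)^2 = 4 * b * L / a" unfolding Lr using a by (simp add: field_simps power2_eq_square)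
    show "0 \<le> 2 * r * b" using r b by simp
  qed
  finally show ?thesis .
qed

lemma change:
  fixes Q P :: "'b measure" and f :: "'b \<Rightarrow> real"
  assumes Q: "prob_space Q" and P: "prob_space P" and sets: "sets P = sets Q"
    and ac: "absolutely_continuous Q P"
    and fm: "f \<in> borel_measurable Q"
    and fb: "\<And>x. x \<in> space Q \<Longrightarrow> \<bar>f x\<bar> \<le> B"
    and a: "\<alpha> > 1" and Hfin: "renyi_H \<alpha> P Q < \<infinity>"
    and s: "s > 0"
    and mgf: "\<And>l. l > 0 \<Longrightarrow> (\<integral>\<^sup>+x. ennreal (exp (l * (f x - (\<integral>x. f x \<partial>Q)))) \<partial>Q) \<le> ennreal (exp (l^2 * s))"
  shows "1 \<le> enn2real (renyi_H \<alpha> P Q)"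
    and "(\<integral>x. f x \<partial>P) - (\<integral>x. f x \<partial>Q) \<le> sqrt (4 * (\<alpha> / (\<alpha> - 1)) * s * ln (enn2real (renyi_H \<alpha> P Q)) / \<alpha>)"
proof -
  interpret Q: prob_space Q by (rule Q)
  interpret P: prob_space P by (rule P)
  define \<beta> where "\<beta> = \<alpha> / (\<alpha> - 1)"
  have a1: "\<alpha> - 1 > 0" using a by simp
  have b1: "\<beta> > 1" "1/\<alpha> + 1/\<beta> = 1" unfolding \<beta>_def using a1 a by (auto simp: field_simps)
  define G where "G x = enn2real (RN_deriv Q P x)" for x
  have Gm: "G \<in> borel_measurable Q" unfolding G_def by measurable
  have G0: "G x \<ge> 0" for x by (simp add: G_def)
  have sfQ: "sigma_finite_measure Q" and sfP: "sigma_finite_measure P"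
    by (simp_all add: prob_space_imp_sigma_finite Q P)
  have "density Q (RN_deriv Q P) = P"
    by (rule sigma_finite_measure.density_RN_deriv[OF sfQ ac sets])
  moreover have "density Q (RN_deriv Q P) = density Q (\<lambda>x. ennreal (G x))"
  proof (rule density_cong)
    show "AE x in Q. RN_deriv Q P x = ennreal (G x)"
      using sigma_finite_measure.RN_deriv_finite[OF sfQ sfP ac sets]
      by eventually_elim (simp add: G_def less_top)
  qed (use Gm in auto)
  ultimately have Pd: "P = density Q (\<lambda>x. ennreal (G x))" by simp
  have spP: "space P = space Q" by (subst Pd) simp
  have intP: "(\<integral>x. \<phi> x \<partial>P) = (\<integral>x. G x * \<phi> x \<partial>Q)" if "\<phi> \<in> borel_measurable Q" for \<phi> :: "'b \<Rightarrow> real"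
    by (subst Pd, subst integral_density) (use that Gm G0 in auto)
  have "emeasure P (space P) = (\<integral>\<^sup>+x. ennreal (G x) \<partial>Q)"
    by (subst (1) Pd, subst emeasure_density) (use Gm in \<open>auto intro!: nn_integral_cong simp: spP\<close>)
  then have "(\<integral>\<^sup>+x. ennreal (G x) \<partial>Q) = ennreal 1" using P.emeasure_space_1 by simp
  then have Gint: "integrable Q G" and Gi: "(\<integral>x. G x \<partial>Q) = 1"
    using nn_integral_eq_integrable[of G Q 1] Gm G0 by auto
  define H where "H = enn2real (renyi_H \<alpha> P Q)"
  have H0: "H \<ge> 0" by (simp add: H_def)
  have "renyi_H \<alpha> P Q = ennreal H" using Hfin by (simp add: H_def less_top)
  then have "(\<integral>\<^sup>+x. ennreal (G x powr \<alpha>) \<partial>Q) = ennreal H" by (simp add: renyi_H_def G_def)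
  then have GPint: "integrable Q (\<lambda>x. G x powr \<alpha>)" and GPi: "(\<integral>x. G x powr \<alpha> \<partial>Q) = H"
    using nn_integral_eq_integrable[of "\<lambda>x. G x powr \<alpha>" Q H] Gm H0 by auto
  have "(\<integral>x. G x \<partial>Q) \<le> (\<integral>x. G x powr \<alpha> / \<alpha> + 1 / \<beta> \<partial>Q)"
  proof (rule integral_mono)
    show "integrable Q (\<lambda>x. G x powr \<alpha> / \<alpha> + 1 / \<beta>)" using GPint by simp
    fix x
    have "G x * 1 \<le> G x powr \<alpha> / \<alpha> + 1 powr \<beta> / \<beta>"
      by (rule Youngs_inequality) (use a b1 G0 in auto)
    then show "G x \<le> G x powr \<alpha> / \<alpha> + 1 / \<beta>" by simp
  qed (rule Gint)
  also have "\<dots> = H / \<alpha> + 1 / \<beta>" using GPint GPi by (simp add: Q.prob_space)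
  finally have "1 \<le> H / \<alpha> + 1 / \<beta>" unfolding Gi .
  then have H1: "H \<ge> 1" using b1 a by (simp add: field_simps)
  then show "1 \<le> enn2real (renyi_H \<alpha> P Q)" by (simp add: H_def)
  have Hpos: "H > 0" using H1 by simp
  have mP: "\<phi> \<in> borel_measurable P" if "\<phi> \<in> borel_measurable Q" for \<phi> :: "'b \<Rightarrow> real"
    using that by (simp add: measurable_cong_sets[OF sets refl])
  define EQ where "EQ = (\<integral>x. f x \<partial>Q)"
  define D where "D x = f x - EQ" for x
  define C where "C = B + \<bar>EQ\<bar>"
  have Dm: "D \<in> borel_measurable Q" unfolding D_def using fm by simp
  have Db: "\<bar>D x\<bar> \<le> C" if "x \<in> space Q" for x using fb[OF that] unfolding D_def C_def by arith
  have fintQ: "integrable Q f" by (rule Q.integrable_const_bound[where B=B]) (use fb fm in auto)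
  have fintP: "integrable P f"
  proof (rule P.integrable_const_bound[where B=B])
    show "AE x in P. norm (f x) \<le> B" using fb by (intro AE_I2) (simp add: spP)
    show "f \<in> borel_measurable P" by (rule mP[OF fm])
  qed
  have DintP: "integrable P D" unfolding D_def using fintP by simp
  have EPD: "(\<integral>x. D x \<partial>P) = (\<integral>x. f x \<partial>P) - EQ" unfolding D_def using fintP by (simp add: P.prob_space)
  have key: "(\<integral>x. D x \<partial>P) \<le> ln H / (\<alpha> * l) + l * (\<beta> * s)" if l: "l > 0" for l
  proof -
    define E where "E x = exp (l * D x)" for x
    have Em: "E \<in> borel_measurable Q" unfolding E_def using Dm by simp
    have Eb: "\<bar>E x\<bar> \<le> exp (l * C)" if "x \<in> space Q" for x
      using Db[OF that] l unfolding E_def by (simp add: abs_le_iff mult_left_mono)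
    define K where "K = (\<integral>x. exp ((l * \<beta>) * (f x - EQ)) \<partial>Q)"
    have lb: "l * \<beta> > 0" using l b1 by simp
    have EBm: "(\<lambda>x. exp ((l * \<beta>) * (f x - EQ))) \<in> borel_measurable Q" using fm by simp
    have EBint: "integrable Q (\<lambda>x. exp ((l * \<beta>) * (f x - EQ)))"
    proof (rule Q.integrable_const_bound[where B="exp (l * \<beta> * C)"])
      show "AE x in Q. norm (exp ((l * \<beta>) * (f x - EQ))) \<le> exp (l * \<beta> * C)"
      proof (rule AE_I2)
        fix x assume x: "x \<in> space Q"
        have "(l * \<beta>) * (f x - EQ) \<le> (l * \<beta>) * C" using Db[OF x] lb by (intro mult_left_mono) (auto simp: D_def)
        then show "norm (exp ((l * \<beta>) * (f x - EQ))) \<le> exp (l * \<beta> * C)" by simp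
      qed
    qed (rule EBm)
    have Kpos: "K > 0"
    proof -
      have "(\<integral>x. exp (- (l * \<beta> * C)) \<partial>Q) \<le> K" unfolding K_def
      proof (rule integral_mono)
        fix x assume x: "x \<in> space Q"
        have "- (l * \<beta> * C) \<le> (l * \<beta>) * (f x - EQ)"
          using Db[OF x] lb mult_left_mono[of "- C" "f x - EQ" "l * \<beta>"] by (auto simp: D_def)
        then show "exp (- (l * \<beta> * C)) \<le> exp ((l * \<beta>) * (f x - EQ))" by simp
      qed (use EBint in auto)
      moreover have "(\<integral>x. exp (- (l * \<beta> * C)) \<partial>Q) > 0" by (simp add: Q.prob_space)
      ultimately show ?thesis by linarith
    qed
    have Kle: "K \<le> exp ((l * \<beta>)^2 * s)"
    proof -
      have "(\<integral>\<^sup>+x. ennreal (exp ((l * \<beta>) * (f x - EQ))) \<partial>Q) = ennreal K"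
        unfolding K_def by (rule nn_integral_eq_integral[OF EBint]) auto
      then have "ennreal K \<le> ennreal (exp ((l * \<beta>)^2 * s))" using mgf[OF lb] by (simp add: EQ_def)
      then show ?thesis by (simp add: ennreal_le_iff)
    qed
    define A where "A = H powr (1/\<alpha>)"
    define Bb where "Bb = K powr (1/\<beta>)"
    have AB: "A > 0" "Bb > 0" using Hpos Kpos by (auto simp: A_def Bb_def)
    have Epow: "E x powr \<beta> = exp ((l * \<beta>) * (f x - EQ))" for x
      by (simp add: E_def powr_def D_def mult_ac)
    have GEint: "integrable Q (\<lambda>x. G x * E x)"
    proof (rule Bochner_Integration.integrable_bound)
      show "integrable Q (\<lambda>x. exp (l * C) * G x)" using Gint by simp
      show "(\<lambda>x. G x * E x) \<in> borel_measurable Q" using Gm Em by simp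
      show "AE x in Q. norm (G x * E x) \<le> norm (exp (l * C) * G x)"
      proof (rule AE_I2)
        fix x assume x: "x \<in> space Q"
        have "G x * \<bar>E x\<bar> \<le> G x * exp (l * C)" using Eb[OF x] G0[of x] by (rule mult_left_mono)
        then show "norm (G x * E x) \<le> norm (exp (l * C) * G x)" using G0[of x] by (simp add: abs_mult mult.commute)
      qed
    qed
    have "(\<integral>x. E x \<partial>P) = (\<integral>x. G x * E x \<partial>Q)" by (rule intP[OF Em])
    also have "\<dots> \<le> (\<integral>x. A * Bb * (G x powr \<alpha> / (H * \<alpha>) + exp ((l * \<beta>) * (f x - EQ)) / (K * \<beta>)) \<partial>Q)"
    proof (rule integral_mono)
      show "integrable Q (\<lambda>x. A * Bb * (G x powr \<alpha> / (H * \<alpha>) + exp ((l * \<beta>) * (f x - EQ)) / (K * \<beta>)))"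
        using GPint EBint by simp
      fix x
      show "G x * E x \<le> A * Bb * (G x powr \<alpha> / (H * \<alpha>) + exp ((l * \<beta>) * (f x - EQ)) / (K * \<beta>))"
        using young_pt[OF G0 _ Hpos Kpos a \<beta>_def, of "E x"] unfolding A_def Bb_def Epow
        by (simp add: E_def)
    qed (rule GEint)
    also have "\<dots> = A * Bb * (H / (H * \<alpha>) + K / (K * \<beta>))"
      using GPint EBint GPi by (simp add: K_def)
    also have "\<dots> = A * Bb" using Hpos Kpos b1 a by (simp add: field_simps)
    finally have EP: "(\<integral>x. E x \<partial>P) \<le> A * Bb" .
    define c where "c = l * (\<integral>x. D x \<partial>P)"
    have "(\<integral>x. exp c * (1 + (l * D x - c)) \<partial>P) \<le> (\<integral>x. E x \<partial>P)"
    proof (rule integral_mono)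
      show "integrable P (\<lambda>x. exp c * (1 + (l * D x - c)))" using DintP by simp
      show "integrable P E"
      proof (rule P.integrable_const_bound[where B="exp (l * C)"])
        show "AE x in P. norm (E x) \<le> exp (l * C)" using Eb by (intro AE_I2) (simp add: spP)
        show "E \<in> borel_measurable P" by (rule mP[OF Em])
      qed
      fix x
      have "exp c * (1 + (l * D x - c)) \<le> exp c * exp (l * D x - c)"
        by (intro mult_left_mono exp_ge_add_one_self) auto
      then show "exp c * (1 + (l * D x - c)) \<le> E x" by (simp add: E_def mult_exp_exp)
    qed
    moreover have "(\<integral>x. exp c * (1 + (l * D x - c)) \<partial>P) = exp c"
      using DintP by (simp add: P.prob_space c_def algebra_simps)
    ultimately have "exp c \<le> A * Bb" using EP by simp
    then have "c \<le> ln (A * Bb)" using AB by (simp add: ln_ge_iff)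
    also have "\<dots> = ln H / \<alpha> + ln K / \<beta>" using AB Hpos Kpos by (simp add: ln_mult A_def Bb_def ln_powr)
    also have "ln K \<le> (l * \<beta>)^2 * s" using ln_le_cancel_iff[of K "exp ((l * \<beta>)^2 * s)"] Kle Kpos by simp
    then have "ln K / \<beta> \<le> l * l * (\<beta> * s)" using b1 by (simp add: divide_le_eq power2_eq_square mult_ac)
    finally have "l * (\<integral>x. D x \<partial>P) \<le> ln H / \<alpha> + l * l * (\<beta> * s)" by (simp add: c_def)
    then have "(\<integral>x. D x \<partial>P) \<le> (ln H / \<alpha> + l * l * (\<beta> * s)) / l"
      using l by (simp add: pos_le_divide_eq mult.commute)
    also have "\<dots> = ln H / (\<alpha> * l) + l * (\<beta> * s)" using l by (simp add: field_simps)
    finally show ?thesis .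
  qed
  have "(\<integral>x. D x \<partial>P) \<le> sqrt (4 * (\<beta> * s) * ln H / \<alpha>)"
    by (rule opt_bound[OF _ _ _ key]) (use H1 a b1 s in auto)
  then show "(\<integral>x. f x \<partial>P) - (\<integral>x. f x \<partial>Q) \<le> sqrt (4 * (\<alpha> / (\<alpha> - 1)) * s * ln (enn2real (renyi_H \<alpha> P Q)) / \<alpha>)"
    by (simp add: EPD EQ_def H_def \<beta>_def mult_ac)
qed

theorem lemma2:
  fixes \<Omega> :: "'w measure" and M :: "nat \<Rightarrow> 'a measure"
    and X :: "nat \<Rightarrow> 'w \<Rightarrow> 'a" and n :: nat
    and f :: "(nat \<Rightarrow> 'a) \<Rightarrow> real" and \<alpha> :: real
  assumes "prob_space \<Omega>"
    and "n \<ge> 1"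
    and X_meas: "\<And>i. i < n \<Longrightarrow> X i \<in> measurable \<Omega> (M i)"
    and ac: "absolutely_continuous
              (PiM {..<n} (\<lambda>i. distr \<Omega> (M i) (X i)))
              (distr \<Omega> (PiM {..<n} M) (\<lambda>\<omega>. \<lambda>i\<in>{..<n}. X i \<omega>))"
    and f_meas: "f \<in> borel_measurable (PiM {..<n} M)"
    and bdd: "\<And>x i xh. x \<in> space (PiM {..<n} M) \<Longrightarrow> i < n \<Longrightarrow> xh \<in> space (M i) \<Longrightarrow>
               \<bar>f x - f (x(i := xh))\<bar> \<le> 1 / real n"
    and "\<alpha> > 1"
    and H_fin: "renyi_H \<alpha> (distr \<Omega> (PiM {..<n} M) (\<lambda>\<omega>. \<lambda>i\<in>{..<n}. X i \<omega>))
                   (PiM {..<n} (\<lambda>i. distr \<Omega> (M i) (X i))) < \<infinity>"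
  shows "let P = distr \<Omega> (PiM {..<n} M) (\<lambda>\<omega>. \<lambda>i\<in>{..<n}. X i \<omega>);
             Q = PiM {..<n} (\<lambda>i. distr \<Omega> (M i) (X i));
             \<beta> = \<alpha> / (\<alpha> - 1);
             H = enn2real (renyi_H \<alpha> P Q);
             t = sqrt (\<beta> * ln H / (2 * \<alpha> * real n))
         in \<bar>(\<integral>x. f x \<partial>P) - (\<integral>x. f x \<partial>Q)\<bar>
              \<le> t + sqrt \<beta> / (2 powr (1 / \<alpha>) * sqrt (2 * real n / \<alpha> * ln H))"
proof -
  interpret \<Omega>: prob_space \<Omega> by fact
  define N where "N i = (if i < n then distr \<Omega> (M i) (X i) else return (count_space UNIV) undefined)" for i
  have Nps: "prob_space (N i)" for i
    by (cases "i < n") (auto simp: N_def intro!: \<Omega>.prob_space_distr X_meas prob_space_return)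
  have QN: "PiM {..<n} (\<lambda>i. distr \<Omega> (M i) (X i)) = PiM {..<n} N"
    by (rule PiM_cong) (auto simp: N_def)
  have spN: "space (N i) = space (M i)" if "i < n" for i using that by (simp add: N_def)
  have setsN: "sets (PiM {..<n} N) = sets (PiM {..<n} M)"
    by (rule sets_PiM_cong) (auto simp: N_def)
  have spPi: "space (PiM {..<n} N) = space (PiM {..<n} M)"
    using sets_eq_imp_space_eq[OF setsN] .
  define P where "P = distr \<Omega> (PiM {..<n} M) (\<lambda>\<omega>. \<lambda>i\<in>{..<n}. X i \<omega>)"
  define Q where "Q = PiM {..<n} N"
  have Pps: "prob_space P" unfolding P_def
    by (rule \<Omega>.prob_space_distr) (rule measurable_restrict, rule X_meas, simp)
  have Qps: "prob_space Q" unfolding Q_def by (rule prob_space_PiM) (rule Nps)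
  have setsPQ: "sets P = sets Q" by (simp add: P_def Q_def setsN)
  have acQ: "absolutely_continuous Q P" using ac by (simp add: QN P_def Q_def)
  have HQ: "renyi_H \<alpha> P Q < \<infinity>" using H_fin by (simp add: QN P_def Q_def)
  have fmN: "f \<in> borel_measurable (PiM {..<n} N)" using f_meas by (simp add: measurable_cong_sets[OF setsN refl])
  have bddN: "\<bar>f x - f (x(i := y))\<bar> \<le> 1 / real n"
    if "x \<in> space (PiM {..<n} N)" "i \<in> {..<n}" "y \<in> space (N i)" for x i y
    using bdd[of x i y] that spPi spN by simp
  have bddN': "\<bar>(- f x) - (- f (x(i := y)))\<bar> \<le> 1 / real n"
    if "x \<in> space (PiM {..<n} N)" "i \<in> {..<n}" "y \<in> space (N i)" for x i y
    using bddN[OF that] by simp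
  have "\<exists>B. \<forall>x\<in>space (PiM {..<n} N). \<bar>f x\<bar> \<le> B"
    apply (rule bdd_abs[where N=N and f=f and c="1 / real n"])
      apply simp
     apply (rule Nps)
    apply (rule bddN; assumption)
    done
  then obtain B where B: "\<And>x. x \<in> space Q \<Longrightarrow> \<bar>f x\<bar> \<le> B" unfolding Q_def by blast
  define s where "s = 1 / (8 * real n)"
  have s: "s > 0" using assms(2) by (simp add: s_def)
  have sq: "l^2 * (1 / real n)^2 * real (card {..<n}) / 8 = l^2 * s" for l
    using assms(2) by (simp add: s_def power2_eq_square field_simps)
  have mgf1: "(\<integral>\<^sup>+x. ennreal (exp (l * (f x - (\<integral>x. f x \<partial>Q)))) \<partial>Q) \<le> ennreal (exp (l^2 * s))"
    if l: "l > 0" for l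
    using mcd[where N=N and I="{..<n}" and f=f and c="1 / real n", OF Nps _ fmN bddN l] unfolding Q_def sq by simp
  have mgf2: "(\<integral>\<^sup>+x. ennreal (exp (l * ((- f x) - (\<integral>x. - f x \<partial>Q)))) \<partial>Q) \<le> ennreal (exp (l^2 * s))"
    if l: "l > 0" for l
    using mcd[where N=N and I="{..<n}" and f="\<lambda>x. - f x" and c="1 / real n", OF Nps _ _ bddN' l] fmN
    unfolding Q_def sq by simp
  have fmQ: "f \<in> borel_measurable Q" using fmN by (simp add: Q_def)
  have c1: "(\<integral>x. f x \<partial>P) - (\<integral>x. f x \<partial>Q) \<le> sqrt (4 * (\<alpha> / (\<alpha> - 1)) * s * ln (enn2real (renyi_H \<alpha> P Q)) / \<alpha>)"
    by (rule change(2)[OF Qps Pps setsPQ acQ fmQ B assms(7) HQ s mgf1])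
  have c2: "(\<integral>x. - f x \<partial>P) - (\<integral>x. - f x \<partial>Q) \<le> sqrt (4 * (\<alpha> / (\<alpha> - 1)) * s * ln (enn2real (renyi_H \<alpha> P Q)) / \<alpha>)"
    by (rule change(2)[OF Qps Pps setsPQ acQ _ _ assms(7) HQ s mgf2]) (use fmQ B in auto)
  have H1: "1 \<le> enn2real (renyi_H \<alpha> P Q)"
    by (rule change(1)[OF Qps Pps setsPQ acQ fmQ B assms(7) HQ s mgf1])
  define H where "H = enn2real (renyi_H \<alpha> P Q)"
  have lnH: "ln H \<ge> 0" using H1 by (simp add: H_def)
  have eqr: "4 * (\<alpha> / (\<alpha> - 1)) * s * ln H / \<alpha> = \<alpha> / (\<alpha> - 1) * ln H / (2 * \<alpha> * real n)"
    using assms(2) assms(7) by (simp add: s_def field_simps)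
  have main: "\<bar>(\<integral>x. f x \<partial>P) - (\<integral>x. f x \<partial>Q)\<bar> \<le> sqrt (\<alpha> / (\<alpha> - 1) * ln H / (2 * \<alpha> * real n))"
    using c1 c2 unfolding H_def[symmetric] eqr by (simp add: abs_le_iff)
  have nn: "0 \<le> sqrt (\<alpha> / (\<alpha> - 1)) / (2 powr (1 / \<alpha>) * sqrt (2 * real n / \<alpha> * ln H))"
    using assms(7) lnH by (intro divide_nonneg_nonneg mult_nonneg_nonneg) auto
  show ?thesis
    unfolding Let_def P_def[symmetric] QN Q_def[symmetric] H_def[symmetric]
    using main nn by linarith
qed

end
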